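(* Let $\mathcal{P}$ denote the family of pdCGs with vertex set $V$. The map sending a pdCG $\mathcal{G}=(\mathcal{V},\mathcal{E})$ to the quadruplet $(V,E,\mathbb{L},\mathbb{E})$, where $E$ is the union of the edge colour classes of $\mathcal{G}$, $\mathbb{L}=\{i\in L\mid \{i\}\in\mathcal{V}\}$ and $\mathbb{E}=\{(i,j)\in E_L\cap\tau(E_R)\mid \{(i,j)\}\in\mathcal{E}\}$ (with $E_L=E\cap F_L$, $E_R=E\cap F_R$), is a one-to-one correspondence between $\mathcal{P}$ and the collection of quadruplets $(V,E,\mathbb{L},\mathbb{E})$ that are compatible with $(L,R)$.
   Context: Let $V=\{1,\dots,p\}$ and let $\tau:V\to V$ be a twin-pairing function: $\tau(i)=j$ implies $\tau(j)=i$, and there is a partition $V=L\cup R$, $L\cap R=\emptyset$, with $\tau(L)=R$. The vertices are numbered so that $L=\{1,\dots,q\}$ and $R=\{q+1,\dots,p\}$. Let $F_V=\{(i,j)\mid i,j\in V,\ i<j\}$. Extend $\tau$ to edges by $\tau(i,j)=(\tau(i),\tau(j))$, with endpoints reordered if necessary so that it lies in $F_V$, and to sets elementwise. Define $F_L=\{(i,j)\in F_V\mid i<\tau(j)\}$ and $F_R=\{(i,j)\in F_V\mid i>\tau(j)\}$. A coloured graph with vertex set $V$ is a pair $(\mathcal{V},\mathcal{E})$ where $\mathcal{V}$ is a partition of $V$ and $\mathcal{E}$ is a partition of an edge set $E\subseteq F_V$. A colour class is atomic if it has one element, and twin-pairing if it is $\{i,\tau(i)\}$ or $\{(i,j),\tau(i,j)\}$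 with $(i,j)\neq\tau(i,j)$. A pdCG is a coloured graph all of whose colour classes are atomic or twin-pairing. For an undirected graph $(V,E)$ with $E\subseteq F_V$, a quadruplet $(V,E,\mathbb{L},\mathbb{E})$ is compatible with $(L,R)$ if $\mathbb{L}\subseteq L$ and $\mathbb{E}\subseteq E_L\cap\tau(E_R)$, where $E_L=E\cap F_L$, $E_R=E\cap F_R$. *)

theory Defs
  imports "HOL-Library.Disjoint_Sets"
begin

type_synonym edge = "nat \<times> nat"

definition FV :: "nat \<Rightarrow> edge set" where
  "FV p = {(i,j). i \<in> {1..p} \<and> j \<in> {1..p} \<and> i < j}"

text \<open>Extension of tau to edges, endpoints reordered so the result lies in F_V.\<close>
definition tau_edge :: "(nat \<Rightarrow> nat) \<Rightarrow> edge \<Rightarrow> edge" where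
  "tau_edge \<tau> e = (min (\<tau> (fst e)) (\<tau> (snd e)), max (\<tau> (fst e)) (\<tau> (snd e)))"

definition FL :: "nat \<Rightarrow> (nat \<Rightarrow> nat) \<Rightarrow> edge set" where
  "FL p \<tau> = {(i,j) \<in> FV p. i < \<tau> j}"

definition FR :: "nat \<Rightarrow> (nat \<Rightarrow> nat) \<Rightarrow> edge set" where
  "FR p \<tau> = {(i,j) \<in> FV p. i > \<tau> j}"

definition coloured_graph :: "nat \<Rightarrow> nat set set \<Rightarrow> edge set set \<Rightarrow> bool" where
  "coloured_graph p VV EE \<longleftrightarrow>
     partition_on {1..p} VV \<and> (\<exists>E. E \<subseteq> FV p \<and> partition_on E EE)"

definition atomic_class :: "'a set \<Rightarrow> bool" where
  "atomic_class C \<longleftrightarrow> (\<exists>x. C = {x})"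

definition twin_vertex_class :: "(nat \<Rightarrow> nat) \<Rightarrow> nat set \<Rightarrow> bool" where
  "twin_vertex_class \<tau> C \<longleftrightarrow> (\<exists>i. C = {i, \<tau> i})"

definition twin_edge_class :: "(nat \<Rightarrow> nat) \<Rightarrow> edge set \<Rightarrow> bool" where
  "twin_edge_class \<tau> C \<longleftrightarrow> (\<exists>e. C = {e, tau_edge \<tau> e} \<and> e \<noteq> tau_edge \<tau> e)"

definition pdCG :: "nat \<Rightarrow> (nat \<Rightarrow> nat) \<Rightarrow> nat set set \<Rightarrow> edge set set \<Rightarrow> bool" where
  "pdCG p \<tau> VV EE \<longleftrightarrow> coloured_graph p VV EE
     \<and> (\<forall>C\<in>VV. atomic_class C \<or> twin_vertex_class \<tau> C)
     \<and> (\<forall>C\<in>EE. atomic_class C \<or> twin_edge_class \<tau> C)"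

definition pdCGs :: "nat \<Rightarrow> (nat \<Rightarrow> nat) \<Rightarrow> (nat set set \<times> edge set set) set" where
  "pdCGs p \<tau> = {(VV, EE). pdCG p \<tau> VV EE}"

definition compatible_quads ::
  "nat \<Rightarrow> nat \<Rightarrow> (nat \<Rightarrow> nat) \<Rightarrow> (nat set \<times> edge set \<times> nat set \<times> edge set) set" where
  "compatible_quads p q \<tau> = {(V, E, LL, EE). V = {1..p} \<and> E \<subseteq> FV p \<and> LL \<subseteq> {1..q}
      \<and> EE \<subseteq> (E \<inter> FL p \<tau>) \<inter> tau_edge \<tau> ` (E \<inter> FR p \<tau>)}"

definition quad_of ::
  "nat \<Rightarrow> nat \<Rightarrow> (nat \<Rightarrow> nat) \<Rightarrow> nat set set \<times> edge set set \<Rightarrow> nat set \<times> edge set \<times> nat set \<times> edge set" where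
  "quad_of p q \<tau> G = (let VV = fst G; EC = snd G; E = \<Union>EC in
     ({1..p}, E, {i \<in> {1..q}. {i} \<in> VV},
      {e \<in> (E \<inter> FL p \<tau>) \<inter> tau_edge \<tau> ` (E \<inter> FR p \<tau>). {e} \<in> EC}))"

end

theory Submission imports Defs begin
locale tw =
  fixes p q :: nat and \<tau> :: "nat \<Rightarrow> nat"
  assumes qp: "q \<le> p" and rng: "\<forall>i\<in>{1..p}. \<tau> i \<in> {1..p}"
    and inv: "\<forall>i\<in>{1..p}. \<tau> (\<tau> i) = i" and img: "\<tau> ` {1..q} = {q+1..p}"
begin

abbreviation T where "T \<equiv> tau_edge \<tau>"

lemma tL: "i \<in> {1..q} \<Longrightarrow> \<tau> i \<in> {q+1..p}" using img by blast
lemma tR: "i \<in> {q+1..p} \<Longrightarrow> \<tau> i \<in> {1..q}"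
proof -
  assume a: "i \<in> {q+1..p}"
  then obtain j where "j \<in> {1..q}" "i = \<tau> j" using img by (metis imageE)
  then show ?thesis using inv qp by auto
qed
lemma tne: "i \<in> {1..p} \<Longrightarrow> \<tau> i \<noteq> i"
  using tL[of i] tR[of i] by (cases "i \<le> q") auto
lemma tinj: "i\<in>{1..p} \<Longrightarrow> j \<in>{1..p} \<Longrightarrow> \<tau> i = \<tau> j \<Longrightarrow> i = j" using inv by metis

lemma FV_iff: "(i,j) \<in> FV p \<longleftrightarrow> i \<in> {1..p} \<and> j \<in> {1..p} \<and> i < j" by (simp add: FV_def)
lemma T_eq: "T (i,j) = (min (\<tau> i) (\<tau> j), max (\<tau> i) (\<tau> j))" by (simp add: tau_edge_def)

lemma T_FV: "e \<in> FV p \<Longrightarrow> T e \<in> FV p"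
proof -
  assume e: "e \<in> FV p"
  obtain i j where ij: "e = (i,j)" by (cases e)
  have A: "i \<in> {1..p}" "j \<in> {1..p}" "i < j" using e ij FV_iff by auto
  have "\<tau> i \<noteq> \<tau> j" using tinj A by fastforce
  moreover have "\<tau> i \<in> {1..p}" "\<tau> j \<in> {1..p}" using rng A by auto
  ultimately show ?thesis unfolding ij T_eq FV_iff by (simp add: min_def max_def)
qed
lemma TT: "e \<in> FV p \<Longrightarrow> T (T e) = e"
proof -
  assume e: "e \<in> FV p"
  obtain i j where ij: "e = (i,j)" by (cases e)
  have A: "i \<in> {1..p}" "j \<in> {1..p}" "i < j" using e ij FV_iff by auto
  have B: "\<tau> (\<tau> i) = i" "\<tau> (\<tau> j) = j" using inv A by auto
  show ?thesis
  proof (cases "\<tau> i < \<tau> j")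
    case True
    then show ?thesis unfolding ij T_eq using B A by simp
  next
    case False
    then show ?thesis unfolding ij T_eq using B A by simp
  qed
qed
lemma FL_iff: "(i,j) \<in> FL p \<tau> \<longleftrightarrow> (i,j) \<in> FV p \<and> i < \<tau> j" by (simp add: FL_def)
lemma FR_iff: "(i,j) \<in> FR p \<tau> \<longleftrightarrow> (i,j) \<in> FV p \<and> i > \<tau> j" by (simp add: FR_def)

lemma FL_FR: "e \<in> FV p \<Longrightarrow> e \<in> FL p \<tau> \<longleftrightarrow> T e \<in> FR p \<tau>"
proof -
  assume e: "e \<in> FV p"
  obtain i j where ij: "e = (i,j)" by (cases e)
  have tf: "T e \<in> FV p" using T_FV e by blast
  have A: "i \<in> {1..p}" "j \<in> {1..p}" "i < j" using e ij FV_iff by auto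
  have B: "\<tau> (\<tau> i) = i" "\<tau> (\<tau> j) = j" using inv A by auto
  have C: "T e \<in> FR p \<tau> \<longleftrightarrow> (if \<tau> i < \<tau> j then \<tau> i > j else \<tau> j > i)"
    using tf unfolding ij T_eq by (auto simp: FR_iff min_def max_def B)
  have D: "e \<in> FL p \<tau> \<longleftrightarrow> i < \<tau> j" using e unfolding ij FL_iff by simp
  show ?thesis unfolding C D
  proof (cases "i \<le> q")
    case True
    then show "i < \<tau> j \<longleftrightarrow> (if \<tau> i < \<tau> j then \<tau> i > j else \<tau> j > i)"
    proof (cases "j \<le> q")
      case True
      then show ?thesis using tL[of i] tL[of j] A \<open>i \<le> q\<close> by auto
    next
      case False
      then show ?thesis using tL[of i] tR[of j] A \<open>i \<le> q\<close> by auto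
    qed
  next
    case False
    then show "i < \<tau> j \<longleftrightarrow> (if \<tau> i < \<tau> j then \<tau> i > j else \<tau> j > i)"
      using tR[of i] tR[of j] A by auto
  qed
qed
lemma FR_FL: "e \<in> FV p \<Longrightarrow> e \<in> FR p \<tau> \<longleftrightarrow> T e \<in> FL p \<tau>"
  using FL_FR[of "T e"] TT T_FV by metis
lemma nFLFR: "e \<in> FV p \<Longrightarrow> e \<notin> FL p \<tau> \<Longrightarrow> e \<notin> FR p \<tau> \<Longrightarrow> T e = e"
proof -
  assume e: "e \<in> FV p" "e \<notin> FL p \<tau>" "e \<notin> FR p \<tau>"
  obtain i j where ij: "e = (i,j)" by (cases e)
  have A: "i \<in> {1..p}" "j \<in> {1..p}" "i < j" using e ij FV_iff by auto
  have "i = \<tau> j" using e unfolding ij FL_iff FR_iff by auto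
  then have "\<tau> i = j" using inv A by auto
  then show ?thesis unfolding ij T_eq using \<open>i = \<tau> j\<close> A by (simp add: min_def max_def)
qed
lemma FL_sub: "FL p \<tau> \<subseteq> FV p" by (auto simp: FL_def)
lemma FR_sub: "FR p \<tau> \<subseteq> FV p" by (auto simp: FR_def)
lemma FLFR_disj: "e \<in> FL p \<tau> \<Longrightarrow> e \<notin> FR p \<tau>" by (auto simp: FL_def FR_def)
lemma FL_ne: "e \<in> FL p \<tau> \<Longrightarrow> T e \<noteq> e"
  using FL_FR FL_sub FLFR_disj by (metis subsetD)

lemma part_uniq: "partition_on A P \<Longrightarrow> C\<in>P \<Longrightarrow> D\<in>P \<Longrightarrow> x\<in>C \<Longrightarrow> x\<in>D \<Longrightarrow> C=D"
  using partition_onD2 disjointD by blast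

definition fV :: "nat set \<Rightarrow> nat \<Rightarrow> nat set" where
  "fV LL i = (if i \<in> LL \<or> \<tau> i \<in> LL then {i} else {i, \<tau> i})"
definition mkV :: "nat set \<Rightarrow> nat set set" where "mkV LL = fV LL ` {1..p}"
definition fE :: "edge set \<Rightarrow> edge set \<Rightarrow> edge \<Rightarrow> edge set" where
  "fE E S e = (if e \<in> S \<or> T e \<in> S \<or> T e \<notin> E \<or> T e = e then {e} else {e, T e})"
definition mkE :: "edge set \<Rightarrow> edge set \<Rightarrow> edge set set" where "mkE E S = fE E S ` E"
definition LLof :: "nat set set \<Rightarrow> nat set" where "LLof VV = {i \<in> {1..q}. {i} \<in> VV}"
definition Sof :: "edge set set \<Rightarrow> edge set" where
  "Sof EC = {e \<in> (\<Union>EC \<inter> FL p \<tau>) \<inter> T ` (\<Union>EC \<inter> FR p \<tau>). {e} \<in> EC}"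

context
  fixes VV EC
  assumes pd: "pdCG p \<tau> VV EC"
begin

lemma partV: "partition_on {1..p} VV" using pd by (simp add: pdCG_def coloured_graph_def)
lemma exE0: "\<exists>E. E \<subseteq> FV p \<and> partition_on E EC" using pd by (simp add: pdCG_def coloured_graph_def)
lemma partE: "partition_on (\<Union>EC) EC"
proof -
  obtain E where "E \<subseteq> FV p" "partition_on E EC" using exE0 by blast
  then show ?thesis using partition_onD1 by metis
qed
lemma EFV: "\<Union>EC \<subseteq> FV p"
proof -
  obtain E where "E \<subseteq> FV p" "partition_on E EC" using exE0 by blast
  then show ?thesis using partition_onD1 by metis
qed

lemma shapeV: "C \<in> VV \<Longrightarrow> i \<in> C \<Longrightarrow> C = {i} \<or> C = {i, \<tau> i}"
proof -
  assume C: "C \<in> VV" "i \<in> C"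
  have sub: "C \<subseteq> {1..p}" using partition_onD1[OF partV] C by blast
  have "atomic_class C \<or> twin_vertex_class \<tau> C" using pd C by (simp add: pdCG_def)
  then show ?thesis
  proof
    assume "atomic_class C" then show ?thesis using C by (auto simp: atomic_class_def)
  next
    assume "twin_vertex_class \<tau> C"
    then obtain j where j: "C = {j, \<tau> j}" by (auto simp: twin_vertex_class_def)
    have "j \<in> {1..p}" using sub j by auto
    then have "\<tau> (\<tau> j) = j" using inv by auto
    then show ?thesis using j C by auto
  qed
qed

lemma V_char: "C \<in> VV \<Longrightarrow> i \<in> C \<Longrightarrow> C = fV (LLof VV) i"
proof -
  assume C: "C \<in> VV" "i \<in> C"
  have ip: "i \<in> {1..p}" using partition_onD1[OF partV] C by blast
  have tip: "\<tau> i \<in> {1..p}" "\<tau> (\<tau> i) = i" "\<tau> i \<noteq> i" using ip rng inv tne by auto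
  show ?thesis
  proof (cases "C = {i}")
    case True
    have "i \<in> LLof VV \<or> \<tau> i \<in> LLof VV"
    proof (cases "i \<le> q")
      case True
      then show ?thesis using ip C \<open>C = {i}\<close> by (auto simp: LLof_def)
    next
      case False
      then have tq: "\<tau> i \<in> {1..q}" using tR ip by auto
      obtain D where D: "D \<in> VV" "\<tau> i \<in> D" using partition_onD1[OF partV] tip by blast
      have "D = {\<tau> i}"
      proof (rule ccontr)
        assume "D \<noteq> {\<tau> i}"
        then have "D = {\<tau> i, i}" using shapeV[OF D] tip by auto
        then have "D = C" using part_uniq[OF partV D(1) C(1), of i] C by auto
        then show False using \<open>C = {i}\<close> \<open>D = {\<tau> i, i}\<close> tip by auto
      qed
      then show ?thesis using tq D by (auto simp: LLof_def)
    qed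
    then show ?thesis using True by (simp add: fV_def)
  next
    case False
    then have Ce: "C = {i, \<tau> i}" using shapeV C by blast
    have "i \<notin> LLof VV"
    proof
      assume "i \<in> LLof VV"
      then have "{i} \<in> VV" by (simp add: LLof_def)
      then have "{i} = C" using part_uniq[OF partV _ C(1), of "{i}" i] C by auto
      then show False using False by auto
    qed
    moreover have "\<tau> i \<notin> LLof VV"
    proof
      assume "\<tau> i \<in> LLof VV"
      then have "{\<tau> i} \<in> VV" by (simp add: LLof_def)
      then have "{\<tau> i} = C" using part_uniq[OF partV _ C(1), of "{\<tau> i}" "\<tau> i"] Ce by auto
      then show False using Ce tip by auto
    qed
    ultimately show ?thesis using Ce by (simp add: fV_def)
  qed
qed

lemma VV_eq: "VV = mkV (LLof VV)"
proof
  show "VV \<subseteq> mkV (LLof VV)"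
  proof
    fix C assume C: "C \<in> VV"
    then obtain i where "i \<in> C" using partition_onD3[OF partV] by (metis equals0I)
    then have "C = fV (LLof VV) i" "i \<in> {1..p}" using V_char C partition_onD1[OF partV] by auto
    then show "C \<in> mkV (LLof VV)" by (auto simp: mkV_def)
  qed
next
  show "mkV (LLof VV) \<subseteq> VV"
  proof
    fix C assume "C \<in> mkV (LLof VV)"
    then obtain i where i: "i \<in> {1..p}" "C = fV (LLof VV) i" by (auto simp: mkV_def)
    then obtain D where "D \<in> VV" "i \<in> D" using partition_onD1[OF partV] by blast
    then show "C \<in> VV" using V_char i by auto
  qed
qed

lemma shapeE: "C \<in> EC \<Longrightarrow> e \<in> C \<Longrightarrow> C = {e} \<or> (C = {e, T e} \<and> T e \<noteq> e)"
proof -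
  assume C: "C \<in> EC" "e \<in> C"
  have sub: "C \<subseteq> FV p" using EFV C by blast
  have "atomic_class C \<or> twin_edge_class \<tau> C" using pd C by (simp add: pdCG_def)
  then show ?thesis
  proof
    assume "atomic_class C" then show ?thesis using C by (auto simp: atomic_class_def)
  next
    assume "twin_edge_class \<tau> C"
    then obtain f where f: "C = {f, T f}" "f \<noteq> T f" by (auto simp: twin_edge_class_def)
    have "f \<in> FV p" using sub f by auto
    then have "T (T f) = f" using TT by auto
    then show ?thesis using f C by auto
  qed
qed

lemma E_char: "C \<in> EC \<Longrightarrow> e \<in> C \<Longrightarrow> C = fE (\<Union>EC) (Sof EC) e"
proof -
  assume C: "C \<in> EC" "e \<in> C"
  define E where "E = \<Union>EC"
  have eE: "e \<in> E" using C E_def by auto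
  have eF: "e \<in> FV p" using EFV eE E_def by auto
  have TeF: "T e \<in> FV p" "T (T e) = e" using eF T_FV TT by auto
  show ?thesis
  proof (cases "C = {e}")
    case True
    have "e \<in> Sof EC \<or> T e \<in> Sof EC \<or> T e \<notin> E \<or> T e = e"
    proof (rule ccontr)
      assume N: "\<not> ?thesis"
      show False
      proof (cases "e \<in> FL p \<tau>")
        case True
        then have "T e \<in> FR p \<tau>" using FL_FR eF by auto
        then have "e \<in> T ` (E \<inter> FR p \<tau>)" using N TeF by (metis IntI imageI)
        then have "e \<in> Sof EC" using True \<open>C = {e}\<close> C eE unfolding Sof_def E_def by auto
        then show False using N by auto
      next
        case False
        then have eR: "e \<in> FR p \<tau>" using nFLFR[OF eF False] N by blast
        then have TL: "T e \<in> FL p \<tau>" using FR_FL eF by auto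
        obtain D where D: "D \<in> EC" "T e \<in> D" using N E_def by auto
        have "D = {T e}"
        proof (rule ccontr)
          assume "D \<noteq> {T e}"
          then have "D = {T e, e}" using shapeE[OF D] TeF by auto
          then have "D = C" using part_uniq[OF partE D(1) C(1), of e] C by auto
          then show False using \<open>C = {e}\<close> \<open>D = {T e, e}\<close> N by auto
        qed
        then have "T e \<in> Sof EC" using TL D eR eE N unfolding Sof_def E_def by auto
        then show False using N by auto
      qed
    qed
    then show ?thesis using True by (simp add: fE_def E_def)
  next
    case False
    then have Ce: "C = {e, T e}" "T e \<noteq> e" using shapeE C by blast+
    have "e \<notin> Sof EC"
    proof
      assume "e \<in> Sof EC"
      then have "{e} \<in> EC" by (simp add: Sof_def)
      then have "{e} = C" using part_uniq[OF partE _ C(1), of "{e}" e] C by auto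
      then show False using False by auto
    qed
    moreover have "T e \<notin> Sof EC"
    proof
      assume "T e \<in> Sof EC"
      then have "{T e} \<in> EC" by (simp add: Sof_def)
      then have "{T e} = C" using part_uniq[OF partE _ C(1), of "{T e}" "T e"] Ce by auto
      then show False using Ce by auto
    qed
    moreover have "T e \<in> E" using Ce C E_def by auto
    ultimately show ?thesis using Ce by (simp add: fE_def E_def)
  qed
qed

lemma EC_eq: "EC = mkE (\<Union>EC) (Sof EC)"
proof
  show "EC \<subseteq> mkE (\<Union>EC) (Sof EC)"
  proof
    fix C assume C: "C \<in> EC"
    then obtain e where "e \<in> C" using partition_onD3[OF partE] by (metis equals0I)
    then have "C = fE (\<Union>EC) (Sof EC) e" "e \<in> \<Union>EC" using E_char C by auto
    then show "C \<in> mkE (\<Union>EC) (Sof EC)" by (auto simp: mkE_def)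
  qed
next
  show "mkE (\<Union>EC) (Sof EC) \<subseteq> EC"
  proof
    fix C assume "C \<in> mkE (\<Union>EC) (Sof EC)"
    then obtain e where i: "e \<in> \<Union>EC" "C = fE (\<Union>EC) (Sof EC) e" by (auto simp: mkE_def)
    then obtain D where "D \<in> EC" "e \<in> D" by blast
    then show "C \<in> EC" using E_char i by auto
  qed
qed

end

lemma fV_mem: "i\<in>{1..p} \<Longrightarrow> x \<in> fV LL i \<Longrightarrow> fV LL x = fV LL i"
  using inv by (auto simp: fV_def split: if_splits)
lemma fV_sub: "i\<in>{1..p} \<Longrightarrow> fV LL i \<subseteq> {1..p}"
  using rng by (auto simp: fV_def)

lemma mkV_part: "partition_on {1..p} (mkV LL)"
proof (rule partition_onI)
  show "\<Union>(mkV LL) = {1..p}"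
  proof
    show "\<Union>(mkV LL) \<subseteq> {1..p}" unfolding mkV_def using fV_sub by blast
    show "{1..p} \<subseteq> \<Union>(mkV LL)"
    proof
      fix i assume "i \<in> {1..p}"
      moreover have "i \<in> fV LL i" by (simp add: fV_def)
      ultimately show "i \<in> \<Union>(mkV LL)" by (auto simp: mkV_def)
    qed
  qed
  show "{} \<notin> mkV LL" by (auto simp: mkV_def fV_def)
  fix A B assume A: "A \<in> mkV LL" and B: "B \<in> mkV LL" and ne: "A \<noteq> B"
  show "disjnt A B"
  proof (rule ccontr)
    assume "\<not> disjnt A B"
    then obtain x where x: "x \<in> A" "x \<in> B" by (auto simp: disjnt_def)
    obtain i j where ij: "i \<in> {1..p}" "A = fV LL i" "j \<in> {1..p}" "B = fV LL j"
      using A B by (auto simp: mkV_def)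
    have "A = fV LL x" using fV_mem ij x by metis
    moreover have "B = fV LL x" using fV_mem ij x by metis
    ultimately show False using ne by simp
  qed
qed

lemma mkV_cls: "\<forall>C\<in>mkV LL. atomic_class C \<or> twin_vertex_class \<tau> C"
  by (auto simp: mkV_def fV_def atomic_class_def twin_vertex_class_def)

lemma LLof_mkV: "LL \<subseteq> {1..q} \<Longrightarrow> LLof (mkV LL) = LL"
proof
  assume LL: "LL \<subseteq> {1..q}"
  show "LLof (mkV LL) \<subseteq> LL"
  proof
    fix i assume "i \<in> LLof (mkV LL)"
    then have i: "i \<in> {1..q}" "{i} \<in> mkV LL" by (auto simp: LLof_def)
    then obtain j where j: "j \<in> {1..p}" "{i} = fV LL j" by (auto simp: mkV_def)
    have "\<tau> j \<noteq> j" using tne j by auto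
    then have "j = i" "i \<in> LL \<or> \<tau> i \<in> LL" using j by (auto simp: fV_def split: if_splits)
    moreover have "\<tau> i \<notin> {1..q}" using tL[OF i(1)] by auto
    ultimately show "i \<in> LL" using LL by auto
  qed
  show "LL \<subseteq> LLof (mkV LL)"
  proof
    fix i assume "i \<in> LL"
    then have "i \<in> {1..q}" "i \<in> {1..p}" "fV LL i = {i}" using LL qp by (auto simp: fV_def)
    then show "i \<in> LLof (mkV LL)" by (force simp: LLof_def mkV_def)
  qed
qed

context
  fixes E S
  assumes EF: "E \<subseteq> FV p" and SE: "S \<subseteq> (E \<inter> FL p \<tau>) \<inter> T ` (E \<inter> FR p \<tau>)"
begin

lemma fE_mem: "e\<in>E \<Longrightarrow> x \<in> fE E S e \<Longrightarrow> x \<in> E \<and> fE E S x = fE E S e"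
proof -
  assume e: "e \<in> E" "x \<in> fE E S e"
  have TTe: "T (T e) = e" using TT EF e by blast
  show ?thesis
  proof (cases "e \<in> S \<or> T e \<in> S \<or> T e \<notin> E \<or> T e = e")
    case True
    then have "fE E S e = {e}" by (simp add: fE_def)
    then show ?thesis using e by simp
  next
    case False
    then have f1: "fE E S e = {e, T e}" by (simp add: fE_def)
    have "fE E S (T e) = {T e, T (T e)}" using False TTe e(1) unfolding fE_def by auto
    then have f2: "fE E S (T e) = {e, T e}" using TTe by auto
    have "x = e \<or> x = T e" using e f1 by auto
    then show ?thesis using f1 f2 e False by auto
  qed
qed

lemma mkE_part: "partition_on E (mkE E S)"
proof (rule partition_onI)
  show "\<Union>(mkE E S) = E"
  proof
    show "\<Union>(mkE E S) \<subseteq> E" unfolding mkE_def using fE_mem by blast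
    show "E \<subseteq> \<Union>(mkE E S)"
    proof
      fix i assume "i \<in> E"
      moreover have "i \<in> fE E S i" by (simp add: fE_def)
      ultimately show "i \<in> \<Union>(mkE E S)" by (auto simp: mkE_def)
    qed
  qed
  show "{} \<notin> mkE E S" by (auto simp: mkE_def fE_def)
  fix A B assume A: "A \<in> mkE E S" and B: "B \<in> mkE E S" and ne: "A \<noteq> B"
  show "disjnt A B"
  proof (rule ccontr)
    assume "\<not> disjnt A B"
    then obtain x where x: "x \<in> A" "x \<in> B" by (auto simp: disjnt_def)
    obtain i j where ij: "i \<in> E" "A = fE E S i" "j \<in> E" "B = fE E S j"
      using A B by (auto simp: mkE_def)
    have "A = fE E S x" using fE_mem ij x by metis
    moreover have "B = fE E S x" using fE_mem ij x by metis
    ultimately show False using ne by simp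
  qed
qed

lemma mkE_cls: "\<forall>C\<in>mkE E S. atomic_class C \<or> twin_edge_class \<tau> C"
proof
  fix C assume "C \<in> mkE E S"
  then obtain e where C: "C = fE E S e" by (auto simp: mkE_def)
  show "atomic_class C \<or> twin_edge_class \<tau> C"
  proof (cases "e \<in> S \<or> T e \<in> S \<or> T e \<notin> E \<or> T e = e")
    case True
    then show ?thesis using C by (simp add: fE_def atomic_class_def)
  next
    case False
    then have "C = {e, T e}" "e \<noteq> T e" using C by (auto simp: fE_def)
    then show ?thesis unfolding twin_edge_class_def by blast
  qed
qed

lemma mkE_Un: "\<Union>(mkE E S) = E" using mkE_part partition_onD1 by metis

lemma Sof_mkE: "Sof (mkE E S) = S"
proof
  show "Sof (mkE E S) \<subseteq> S"
  proof
    fix e assume "e \<in> Sof (mkE E S)"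
    then have e: "e \<in> E" "e \<in> FL p \<tau>" "e \<in> T ` (E \<inter> FR p \<tau>)" "{e} \<in> mkE E S"
      unfolding Sof_def mkE_Un by auto
    then obtain x where x: "x \<in> E" "x \<in> FR p \<tau>" "e = T x" by auto
    have "x \<in> FV p" using x EF by blast
    then have Te: "T e = x" using x(3) TT by simp
    obtain j where j: "j \<in> E" "{e} = fE E S j" using e by (auto simp: mkE_def)
    have "j = e" "e \<in> S \<or> T e \<in> S \<or> T e \<notin> E \<or> T e = e"
      using j by (auto simp: fE_def split: if_splits)
    moreover have "T e \<noteq> e" using FL_ne e by auto
    moreover have "T e \<notin> S" using SE Te x(2) FLFR_disj by blast
    ultimately show "e \<in> S" using Te x by auto
  qed
  show "S \<subseteq> Sof (mkE E S)"
  proof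
    fix e assume e: "e \<in> S"
    then have "e \<in> E" "fE E S e = {e}" using SE by (auto simp: fE_def)
    then have "{e} \<in> mkE E S" by (force simp: mkE_def)
    then show "e \<in> Sof (mkE E S)" using e SE unfolding Sof_def mkE_Un by auto
  qed
qed

end

lemma quad_eq: "quad_of p q \<tau> (VV,EC) = ({1..p}, \<Union>EC, LLof VV, Sof EC)"
  by (simp add: quad_of_def LLof_def Sof_def Let_def)

lemma main: "bij_betw (quad_of p q \<tau>) (pdCGs p \<tau>) (compatible_quads p q \<tau>)"
proof (rule bij_betw_byWitness[where f' = "\<lambda>(V,E,LL,S). (mkV LL, mkE E S)"])
  show "\<forall>a\<in>pdCGs p \<tau>. (\<lambda>(V,E,LL,S). (mkV LL, mkE E S)) (quad_of p q \<tau> a) = a"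
  proof
    fix a assume a: "a \<in> pdCGs p \<tau>"
    obtain VV EC where a2: "a = (VV,EC)" by (cases a)
    have pd: "pdCG p \<tau> VV EC" using a a2 by (simp add: pdCGs_def)
    show "(\<lambda>(V,E,LL,S). (mkV LL, mkE E S)) (quad_of p q \<tau> a) = a"
      unfolding a2 quad_eq using VV_eq[OF pd, symmetric] EC_eq[OF pd, symmetric] by simp
  qed
  show "\<forall>b\<in>compatible_quads p q \<tau>. quad_of p q \<tau> ((\<lambda>(V,E,LL,S). (mkV LL, mkE E S)) b) = b"
  proof
    fix b assume b: "b \<in> compatible_quads p q \<tau>"
    obtain V E LL S where b2: "b = (V,E,LL,S)" by (cases b)
    have c: "V = {1..p}" "E \<subseteq> FV p" "LL \<subseteq> {1..q}"
      "S \<subseteq> (E \<inter> FL p \<tau>) \<inter> T ` (E \<inter> FR p \<tau>)" using b b2 by (auto simp: compatible_quads_def)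
    show "quad_of p q \<tau> ((\<lambda>(V,E,LL,S). (mkV LL, mkE E S)) b) = b"
    proof -
      have "quad_of p q \<tau> (mkV LL, mkE E S) = ({1..p}, \<Union>(mkE E S), LLof (mkV LL), Sof (mkE E S))"
        by (rule quad_eq)
      also have "\<dots> = (V,E,LL,S)"
        using c(1) mkE_Un[OF c(2,4)] Sof_mkE[OF c(2,4)] LLof_mkV[OF c(3)] by simp
      finally show ?thesis unfolding b2 by simp
    qed
  qed
  show "quad_of p q \<tau> ` pdCGs p \<tau> \<subseteq> compatible_quads p q \<tau>"
  proof
    fix b assume "b \<in> quad_of p q \<tau> ` pdCGs p \<tau>"
    then obtain VV EC where a: "pdCG p \<tau> VV EC" "b = quad_of p q \<tau> (VV,EC)"
      by (auto simp: pdCGs_def)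
    have "\<Union>EC \<subseteq> FV p" using EFV[OF a(1)] .
    moreover have "LLof VV \<subseteq> {1..q}" unfolding LLof_def by blast
    moreover have "Sof EC \<subseteq> (\<Union>EC \<inter> FL p \<tau>) \<inter> T ` (\<Union>EC \<inter> FR p \<tau>)"
      unfolding Sof_def by blast
    ultimately show "b \<in> compatible_quads p q \<tau>" unfolding a(2) quad_eq compatible_quads_def
      by blast
  qed
  show "(\<lambda>(V,E,LL,S). (mkV LL, mkE E S)) ` compatible_quads p q \<tau> \<subseteq> pdCGs p \<tau>"
  proof
    fix a assume "a \<in> (\<lambda>(V,E,LL,S). (mkV LL, mkE E S)) ` compatible_quads p q \<tau>"
    then obtain bb where bb: "bb \<in> compatible_quads p q \<tau>" "a = (\<lambda>(V,E,LL,S). (mkV LL, mkE E S)) bb"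
      by (rule imageE)
    obtain V E LL S where b2: "bb = (V,E,LL,S)" by (cases bb)
    have b: "a = (mkV LL, mkE E S)" using bb(2) b2 by simp
    have c: "E \<subseteq> FV p" "S \<subseteq> (E \<inter> FL p \<tau>) \<inter> T ` (E \<inter> FR p \<tau>)"
      using bb(1) b2 by (simp_all add: compatible_quads_def)
    have "pdCG p \<tau> (mkV LL) (mkE E S)"
      unfolding pdCG_def coloured_graph_def
    proof (intro conjI)
      show "partition_on {1..p} (mkV LL)" by (rule mkV_part)
      show "\<exists>E'. E' \<subseteq> FV p \<and> partition_on E' (mkE E S)" using c(1) mkE_part[OF c] by blast
      show "\<forall>C\<in>mkV LL. atomic_class C \<or> twin_vertex_class \<tau> C" by (rule mkV_cls)
      show "\<forall>C\<in>mkE E S. atomic_class C \<or> twin_edge_class \<tau> C" by (rule mkE_cls[OF c])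
    qed
    then show "a \<in> pdCGs p \<tau>" using b by (simp add: pdCGs_def)
  qed
qed

end

theorem theorem4:
  fixes p q :: nat and \<tau> :: "nat \<Rightarrow> nat"
  assumes "q \<le> p"
    and "\<forall>i\<in>{1..p}. \<tau> i \<in> {1..p}"
    and "\<forall>i\<in>{1..p}. \<tau> (\<tau> i) = i"
    and "\<tau> ` {1..q} = {q+1..p}"
  shows "bij_betw (quad_of p q \<tau>) (pdCGs p \<tau>) (compatible_quads p q \<tau>)"
  using tw.main[OF tw.intro[OF assms]] .

end
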